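(* Let $G$ be a $2$-edge-connected graph and $e\in E(G)$. Then the inequality $x_e\ge 0$ defines a facet of $\mathrm{TECSP}(G)$ if and only if $e$ is not contained in any cut of size exactly $3$.
   Context: All graphs are finite, simple and undirected. For $\emptyset\subsetneq S\subsetneq V(G)$, $\delta(S)$ is the set of edges with exactly one endpoint in $S$ (a cut); a cut with $k$ edges is a $k$-cut. An edge $e$ is a bridge if $\{e\}=\delta(S)$ for some $S$. A graph is $2$-edge-connected if it is connected and has no bridges; the empty graph and a single vertex are $2$-edge-connected. $\chi^H\in\{0,1\}^{E(G)}$ is the incidence vector of $E(H)$, and $\mathrm{TECSP}(G)=\mathrm{conv}\{\chi^H : H\subseteq G\text{ is }2\text{-edge-connected}\}\subseteq\mathbb{R}^{E(G)}$. A facet is a face of dimension $\dim(\mathrm{TECSP}(G))-1$. *)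

theory Defs
  imports "HOL-Analysis.Analysis"
begin

text \<open>A finite simple graph: vertex set V (finite), edge set = all elements of the
finite edge type 'e, each edge e has a 2-element set of endpoints ends e in V,
and distinct edges have distinct endpoint sets (no parallel edges).\<close>

definition simple_graph :: "'v set \<Rightarrow> ('e::finite \<Rightarrow> 'v set) \<Rightarrow> bool" where
  "simple_graph V ends \<longleftrightarrow> finite V \<and> inj ends \<and> (\<forall>e. ends e \<subseteq> V \<and> card (ends e) = 2)"

definition cut_edges :: "('e \<Rightarrow> 'v set) \<Rightarrow> 'e set \<Rightarrow> 'v set \<Rightarrow> 'e set" where
  "cut_edges ends F S = {e \<in> F. card (ends e \<inter> S) = 1}"

definition adj_rel :: "('e \<Rightarrow> 'v set) \<Rightarrow> 'e set \<Rightarrow> ('v \<times> 'v) set" where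
  "adj_rel ends F = {(x, y). \<exists>e\<in>F. ends e = {x, y}}"

definition connected_graph :: "('e \<Rightarrow> 'v set) \<Rightarrow> 'v set \<Rightarrow> 'e set \<Rightarrow> bool" where
  "connected_graph ends W F \<longleftrightarrow> (\<forall>u\<in>W. \<forall>v\<in>W. (u, v) \<in> (adj_rel ends F)\<^sup>*)"

definition is_bridge :: "('e \<Rightarrow> 'v set) \<Rightarrow> 'v set \<Rightarrow> 'e set \<Rightarrow> 'e \<Rightarrow> bool" where
  "is_bridge ends W F e \<longleftrightarrow>
     (\<exists>S. {} \<noteq> S \<and> S \<subset> W \<and> cut_edges ends F S = {e})"

definition two_edge_connected :: "('e \<Rightarrow> 'v set) \<Rightarrow> 'v set \<Rightarrow> 'e set \<Rightarrow> bool" where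
  "two_edge_connected ends W F \<longleftrightarrow>
     connected_graph ends W F \<and> (\<forall>e\<in>F. \<not> is_bridge ends W F e)"

definition is_subgraph :: "'v set \<Rightarrow> ('e \<Rightarrow> 'v set) \<Rightarrow> 'v set \<Rightarrow> 'e set \<Rightarrow> bool" where
  "is_subgraph V ends W F \<longleftrightarrow> W \<subseteq> V \<and> (\<forall>e\<in>F. ends e \<subseteq> W)"

definition incidence_vector :: "'e::finite set \<Rightarrow> real ^ 'e" where
  "incidence_vector F = (\<chi> e. if e \<in> F then 1 else 0)"

definition TECSP :: "'v set \<Rightarrow> ('e::finite \<Rightarrow> 'v set) \<Rightarrow> (real ^ 'e) set" where
  "TECSP V ends = convex hull
     {incidence_vector F | F. \<exists>W. is_subgraph V ends W F \<and> two_edge_connected ends W F}"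

end

theory Submission
  imports Defs
begin

definition sdiff :: "'a set \<Rightarrow> 'a set \<Rightarrow> 'a set" where
  "sdiff S T = (S - T) \<union> (T - S)"

lemma card_pair_Int: "p \<noteq> q \<Longrightarrow> card ({p,q} \<inter> S) = 1 \<longleftrightarrow> (p \<in> S \<longleftrightarrow> q \<notin> S)"
  by (cases "p \<in> S"; cases "q \<in> S") auto

context
  fixes V :: "'v set" and ends :: "'e::finite \<Rightarrow> 'v set"
  assumes sg: "simple_graph V ends"
begin

lemma ends2: "\<exists>p q. p \<noteq> q \<and> ends h = {p,q} \<and> p \<in> V \<and> q \<in> V"
proof -
  have "card (ends h) = 2" "ends h \<subseteq> V" using sg unfolding simple_graph_def by auto
  then show ?thesis by (metis card_2_iff insert_subset)
qed

lemma cut_mem: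
  assumes "ends h = {p,q}" "p \<noteq> q"
  shows "h \<in> cut_edges ends Y S \<longleftrightarrow> h \<in> Y \<and> (p \<in> S \<longleftrightarrow> q \<notin> S)"
  using assms card_pair_Int[of p q S] unfolding cut_edges_def by auto

lemma cut_sdiff:
  "cut_edges ends Y (sdiff S T) = sdiff (cut_edges ends Y S) (cut_edges ends Y T)"
proof (rule set_eqI)
  fix h
  obtain p q where pq: "p \<noteq> q" "ends h = {p,q}" using ends2 by blast
  show "h \<in> cut_edges ends Y (sdiff S T) \<longleftrightarrow> h \<in> sdiff (cut_edges ends Y S) (cut_edges ends Y T)"
    using cut_mem[OF pq(2,1), of Y] unfolding sdiff_def by auto
qed

lemma cut_Int: "cut_edges ends Y S = cut_edges ends UNIV S \<inter> Y"
  unfolding cut_edges_def by auto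

lemma cut_inter_V: "cut_edges ends Y S = cut_edges ends Y (S \<inter> V)"
proof -
  have "ends h \<inter> S = ends h \<inter> (S \<inter> V)" for h using sg unfolding simple_graph_def by blast
  then show ?thesis unfolding cut_edges_def by simp
qed

lemma D_cut:
  assumes "is_subgraph V ends W F" "two_edge_connected ends W F"
  shows "card (cut_edges ends F S) \<noteq> 1"
proof
  assume c1: "card (cut_edges ends F S) = 1"
  then obtain h where h: "cut_edges ends F S = {h}" by (meson card_1_singletonE)
  have eq: "cut_edges ends F S = cut_edges ends F (S \<inter> W)"
  proof -
    have "ends k \<inter> S = ends k \<inter> (S \<inter> W)" if "k \<in> F" for k
      using assms(1) that unfolding is_subgraph_def by blast
    then show ?thesis unfolding cut_edges_def by auto
  qed
  have hF: "h \<in> F" "card (ends h \<inter> S) = 1" using h unfolding cut_edges_def by auto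
  have "ends h \<subseteq> W" using hF assms(1) unfolding is_subgraph_def by auto
  obtain p q where pq: "p \<noteq> q" "ends h = {p,q}" using ends2 by blast
  have x: "p \<in> S \<longleftrightarrow> q \<notin> S" using hF(2) pq card_pair_Int[of p q S] by simp
  have ne: "S \<inter> W \<noteq> {}" using x \<open>ends h \<subseteq> W\<close> pq by blast
  have pr: "S \<inter> W \<noteq> W" using x \<open>ends h \<subseteq> W\<close> pq by blast
  have "is_bridge ends W F h"
    unfolding is_bridge_def using ne pr h eq by (intro exI[of _ "S \<inter> W"]) auto
  then show False using assms(2) hF(1) unfolding two_edge_connected_def by blast
qed

lemma cancel:
  assumes "finite Z" "Z \<inter> Q = {}" "\<forall>z\<in>Z. \<exists>T. cut_edges ends Y T - Q = {z}"
  shows "\<exists>S'. cut_edges ends Y S' \<inter> Z = {} \<and>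
              cut_edges ends Y S' - Z - Q = cut_edges ends Y S - Z - Q"
  using assms
proof (induction Z rule: finite_induct)
  case empty
  then show ?case by auto
next
  case (insert z Z)
  then obtain S1 where S1: "cut_edges ends Y S1 \<inter> Z = {}"
    "cut_edges ends Y S1 - Z - Q = cut_edges ends Y S - Z - Q" by auto
  obtain T where T: "cut_edges ends Y T - Q = {z}" using insert.prems by auto
  show ?case
  proof (cases "z \<in> cut_edges ends Y S1")
    case False
    then show ?thesis using S1 by (intro exI[of _ S1]) blast
  next
    case True
    have "cut_edges ends Y (sdiff S1 T) = sdiff (cut_edges ends Y S1) (cut_edges ends Y T)"
      by (rule cut_sdiff)
    then show ?thesis using S1 T True insert.hyps insert.prems
      by (intro exI[of _ "sdiff S1 T"]) (auto simp: sdiff_def)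
  qed
qed

end

context
  fixes V :: "'v set" and ends :: "'e::finite \<Rightarrow> 'v set"
  assumes sg: "simple_graph V ends"
begin

lemma adj_sym: "(x,y) \<in> adj_rel ends J \<Longrightarrow> (y,x) \<in> adj_rel ends J"
  unfolding adj_rel_def by (auto simp: insert_commute)

lemma reach_closed:
  assumes "j \<in> J" "ends j \<inter> {y. (x,y) \<in> (adj_rel ends J)\<^sup>*} \<noteq> {}"
  shows "ends j \<subseteq> {y. (x,y) \<in> (adj_rel ends J)\<^sup>*}"
proof -
  obtain p q where pq: "p\<noteq>q" "ends j = {p,q}" using ends2[OF sg] by blast
  have "(p,q) \<in> adj_rel ends J" "(q,p) \<in> adj_rel ends J"
    using assms(1) pq unfolding adj_rel_def by (auto simp: insert_commute)
  moreover from assms(2) pq have "(x,p) \<in> (adj_rel ends J)\<^sup>* \<or> (x,q) \<in> (adj_rel ends J)\<^sup>*" by auto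
  ultimately have "(x,p) \<in> (adj_rel ends J)\<^sup>* \<and> (x,q) \<in> (adj_rel ends J)\<^sup>*"
    by (meson rtrancl.rtrancl_into_rtrancl)
  then show ?thesis using pq by auto
qed

lemma comp:
  assumes bl: "\<forall>S. card (cut_edges ends J S) \<noteq> 1" and x: "x \<in> V"
  defines "R \<equiv> {y. (x,y) \<in> (adj_rel ends J)\<^sup>*}"
  defines "K \<equiv> {j \<in> J. ends j \<subseteq> R}"
  shows "is_subgraph V ends R K" "two_edge_connected ends R K"
proof -
  have RV: "R \<subseteq> V"
  proof
    fix y assume "y \<in> R"
    then have "(x,y) \<in> (adj_rel ends J)\<^sup>*" unfolding R_def by simp
    then show "y \<in> V"
    proof (induction rule: rtrancl_induct)
      case base then show ?case using x .
    next
      case (step y z)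
      then obtain j where "ends j = {y,z}" unfolding adj_rel_def by auto
      then show ?case using sg unfolding simple_graph_def by blast
    qed
  qed
  show "is_subgraph V ends R K" using RV unfolding is_subgraph_def K_def by auto
  have xK: "(x,y) \<in> (adj_rel ends K)\<^sup>*" if "(x,y) \<in> (adj_rel ends J)\<^sup>*" for y
    using that
  proof (induction rule: rtrancl_induct)
    case base then show ?case by simp
  next
    case (step y z)
    then obtain j where j: "j \<in> J" "ends j = {y,z}" unfolding adj_rel_def by auto
    have "y \<in> R" using step(1) unfolding R_def by simp
    then have "ends j \<subseteq> R" using reach_closed[of j J x] j unfolding R_def by auto
    then have "j \<in> K" using j unfolding K_def by auto
    then have "(y,z) \<in> adj_rel ends K" using j unfolding adj_rel_def by auto
    with step(3) show ?case by (rule rtrancl_into_rtrancl)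
  qed
  have symK: "sym ((adj_rel ends K)\<^sup>*)"
    by (rule sym_rtrancl) (auto simp: sym_def intro: adj_sym)
  have conn: "connected_graph ends R K"
    unfolding connected_graph_def
  proof (intro ballI)
    fix y z assume "y \<in> R" "z \<in> R"
    then have "(x,y) \<in> (adj_rel ends K)\<^sup>*" "(x,z) \<in> (adj_rel ends K)\<^sup>*" using xK unfolding R_def by auto
    then show "(y,z) \<in> (adj_rel ends K)\<^sup>*" using symK by (meson rtrancl_trans symD)
  qed
  have cutKJ: "cut_edges ends J S = cut_edges ends K S" if "S \<subseteq> R" for S
  proof
    show "cut_edges ends J S \<subseteq> cut_edges ends K S"
    proof
      fix h assume h: "h \<in> cut_edges ends J S"
      then have "h \<in> J" "card (ends h \<inter> S) = 1" unfolding cut_edges_def by auto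
      then have "ends h \<inter> S \<noteq> {}" by auto
      then have "ends h \<inter> R \<noteq> {}" using that by auto
      then have "ends h \<subseteq> R" using reach_closed[of h J x] \<open>h \<in> J\<close> unfolding R_def by auto
      then show "h \<in> cut_edges ends K S" using h unfolding K_def cut_edges_def by auto
    qed
    show "cut_edges ends K S \<subseteq> cut_edges ends J S" unfolding K_def cut_edges_def by auto
  qed
  have "\<not> is_bridge ends R K k" for k
  proof
    assume "is_bridge ends R K k"
    then obtain S where "S \<subset> R" "cut_edges ends K S = {k}" unfolding is_bridge_def by auto
    then have "cut_edges ends J S = {k}" using cutKJ by auto
    then show False using bl[rule_format, of S] by simp
  qed
  then show "two_edge_connected ends R K"
    unfolding two_edge_connected_def using conn by auto
qed

lemma comp_mem:
  assumes "j \<in> J" "x \<in> ends j"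
  shows "j \<in> {j \<in> J. ends j \<subseteq> {y. (x,y) \<in> (adj_rel ends J)\<^sup>*}}"
  using reach_closed[of j J x] assms by auto

end

lemma iv_nth: "incidence_vector A $ i = (if i \<in> A then 1 else 0)"
  unfolding incidence_vector_def by simp

lemma iv_union: "A \<inter> B = {} \<Longrightarrow> incidence_vector (A \<union> B) = incidence_vector A + incidence_vector B"
  by (auto simp: vec_eq_iff iv_nth)

lemma iv_diff: "B \<subseteq> A \<Longrightarrow> incidence_vector (A - B) = incidence_vector A - incidence_vector B"
  by (auto simp: vec_eq_iff iv_nth)

lemma iv_empty: "incidence_vector {} = 0"
  by (auto simp: vec_eq_iff iv_nth)

definition DD :: "'v set \<Rightarrow> ('e::finite \<Rightarrow> 'v set) \<Rightarrow> 'e set set" where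
  "DD V ends = {F. \<exists>W. is_subgraph V ends W F \<and> two_edge_connected ends W F}"

definition pr :: "('e \<Rightarrow> 'v set) \<Rightarrow> 'e \<Rightarrow> 'e \<Rightarrow> bool" where
  "pr ends f g \<longleftrightarrow> f \<noteq> g \<and> (\<exists>T. cut_edges ends UNIV T = {f,g})"

context
  fixes V :: "'v set" and ends :: "'e::finite \<Rightarrow> 'v set" and e :: 'e
  assumes sg: "simple_graph V ends"
    and tec: "two_edge_connected ends V UNIV"
begin

lemma UNIV_DD: "UNIV \<in> DD V ends"
  using sg tec unfolding DD_def is_subgraph_def simple_graph_def by auto

lemma G_nb: "card (cut_edges ends UNIV S) \<noteq> 1"
  using D_cut[OF sg _ tec] sg unfolding is_subgraph_def simple_graph_def by auto

lemma DD_cut: "F \<in> DD V ends \<Longrightarrow> card (cut_edges ends F S) \<noteq> 1"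
  using D_cut[OF sg] unfolding DD_def by blast

lemma sumcomp:
  "(\<forall>S. card (cut_edges ends J S) \<noteq> 1) \<Longrightarrow> e \<notin> J \<Longrightarrow>
    incidence_vector J \<in> span {x \<in> incidence_vector ` DD V ends. x $ e = 0}"
proof (induction "card J" arbitrary: J rule: less_induct)
  case less
  show ?case
  proof (cases "J = {}")
    case True then show ?thesis by (simp add: iv_empty span_zero)
  next
    case False
    then obtain h where h: "h \<in> J" by auto
    obtain p q where pq: "p \<noteq> q" "ends h = {p,q}" "p \<in> V" "q \<in> V" using ends2[OF sg] by blast
    define R where "R = {y. (p,y) \<in> (adj_rel ends J)\<^sup>*}"
    define K where "K = {j \<in> J. ends j \<subseteq> R}"
    have K: "is_subgraph V ends R K" "two_edge_connected ends R K"
      using comp[OF sg less.prems(1) pq(3)] unfolding R_def K_def by auto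
    have hK: "h \<in> K" using comp_mem[OF sg h, of p] pq unfolding K_def R_def by auto
    have KJ: "K \<subseteq> J" unfolding K_def by auto
    have KD: "K \<in> DD V ends" using K unfolding DD_def by auto
    have "incidence_vector K \<in> {x \<in> incidence_vector ` DD V ends. x $ e = 0}"
      using KD less.prems(2) KJ by (auto simp: iv_nth)
    then have spK: "incidence_vector K \<in> span {x \<in> incidence_vector ` DD V ends. x $ e = 0}"
      by (rule span_base)
    have disj: "ends j \<inter> R = {}" if "j \<in> J - K" for j
    proof (rule ccontr)
      assume "ends j \<inter> R \<noteq> {}"
      then have "ends j \<subseteq> R" using reach_closed[OF sg, of j J p] that unfolding R_def by auto
      then show False using that unfolding K_def by auto
    qed
    have cut_rest: "cut_edges ends (J - K) S = cut_edges ends J (S - R)" for S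
    proof -
      have a: "ends j \<inter> (S - R) = {}" if "j \<in> K" for j using that unfolding K_def by auto
      have b: "ends j \<inter> (S - R) = ends j \<inter> S" if "j \<in> J - K" for j using disj[OF that] by auto
      show ?thesis
      proof (rule set_eqI)
        fix j show "j \<in> cut_edges ends (J - K) S \<longleftrightarrow> j \<in> cut_edges ends J (S - R)"
          unfolding cut_edges_def using a[of j] b[of j] by (cases "j \<in> K") auto
      qed
    qed
    have bl: "\<forall>S. card (cut_edges ends (J - K) S) \<noteq> 1" using cut_rest less.prems(1) by auto
    have "card (J - K) < card J" using hK KJ by (intro psubset_card_mono) auto
    then have sp2: "incidence_vector (J - K) \<in> span {x \<in> incidence_vector ` DD V ends. x $ e = 0}"
      using less.hyps bl less.prems(2) by auto
    have "incidence_vector J = incidence_vector K + incidence_vector (J - K)"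
      using iv_union[of K "J - K"] KJ by (simp add: Un_absorb1 Un_Diff_cancel)
    then show ?thesis using span_add[OF spK sp2] by simp
  qed
qed

lemma pr_sym: "pr ends f g \<Longrightarrow> pr ends g f"
  unfolding pr_def by (auto simp: insert_commute)

lemma pr_trans: "pr ends f g \<Longrightarrow> pr ends g h \<Longrightarrow> f \<noteq> h \<Longrightarrow> pr ends f h"
proof -
  assume a: "pr ends f g" "pr ends g h" "f \<noteq> h"
  then obtain T1 T2 where T: "cut_edges ends UNIV T1 = {f,g}" "cut_edges ends UNIV T2 = {g,h}"
    "f \<noteq> g" "g \<noteq> h" unfolding pr_def by auto
  have "cut_edges ends UNIV (sdiff T1 T2) = {f,h}"
    using cut_sdiff[OF sg] T a(3) by (auto simp: sdiff_def)
  then show ?thesis using a(3) unfolding pr_def by auto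
qed

lemma DD_pr: "F \<in> DD V ends \<Longrightarrow> pr ends f g \<Longrightarrow> f \<in> F \<Longrightarrow> g \<in> F"
proof -
  assume a: "F \<in> DD V ends" "pr ends f g" "f \<in> F"
  then obtain T where T: "cut_edges ends UNIV T = {f,g}" "f \<noteq> g" unfolding pr_def by auto
  have "cut_edges ends F T = {f,g} \<inter> F" using cut_Int[OF sg, of F T] T by auto
  then show "g \<in> F" using DD_cut[OF a(1), of T] a(3) T(2) by (cases "g \<in> F") auto
qed

end

context
  fixes V :: "'v set" and ends :: "'e::finite \<Rightarrow> 'v set" and e :: 'e
  assumes sg: "simple_graph V ends"
    and tec: "two_edge_connected ends V UNIV"
    and no3: "\<forall>S. e \<in> cut_edges ends UNIV S \<longrightarrow> card (cut_edges ends UNIV S) \<noteq> 3"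
begin

lemma P1: "card (cut_edges ends (- insert e {g. pr ends e g}) S) \<noteq> 1"
proof
  define Ge where "Ge = insert e {g. pr ends e g}"
  assume "card (cut_edges ends (- insert e {g. pr ends e g}) S) = 1"
  then obtain b where b: "cut_edges ends (-Ge) S = {b}" unfolding Ge_def by (meson card_1_singletonE)
  have all: "\<forall>z\<in>Ge - {e}. \<exists>T. cut_edges ends UNIV T - {e} = {z}"
  proof
    fix z assume z: "z \<in> Ge - {e}"
    then have "pr ends e z" unfolding Ge_def by auto
    then obtain T where "cut_edges ends UNIV T = {e,z}" unfolding pr_def by auto
    then show "\<exists>T. cut_edges ends UNIV T - {e} = {z}" using z by (intro exI[of _ T]) auto
  qed
  have fin: "finite (Ge - {e})" by simp
  have dj: "(Ge - {e}) \<inter> {e} = {}" by auto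
  have "\<exists>S'. cut_edges ends UNIV S' \<inter> (Ge - {e}) = {} \<and>
      cut_edges ends UNIV S' - (Ge - {e}) - {e} = cut_edges ends UNIV S - (Ge - {e}) - {e}"
    by (rule cancel[OF sg fin dj all])
  then obtain S' where S': "cut_edges ends UNIV S' \<inter> (Ge - {e}) = {}"
      "cut_edges ends UNIV S' - (Ge - {e}) - {e} = cut_edges ends UNIV S - (Ge - {e}) - {e}"
    by blast
  have bG: "b \<notin> Ge" using b unfolding cut_edges_def by auto
  have "cut_edges ends UNIV S - (Ge - {e}) - {e} = {b}"
    using b cut_Int[OF sg, of "-Ge" S] unfolding Ge_def by auto
  then have c: "cut_edges ends UNIV S' \<subseteq> {b,e}" "b \<in> cut_edges ends UNIV S'"
    using S' by auto
  show False
  proof (cases "e \<in> cut_edges ends UNIV S'")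
    case True
    then have "cut_edges ends UNIV S' = {e,b}" using c by auto
    moreover have "b \<noteq> e" using bG unfolding Ge_def by auto
    ultimately have "pr ends e b" unfolding pr_def by auto
    then show False using bG unfolding Ge_def by auto
  next
    case False
    then have "cut_edges ends UNIV S' = {b}" using c by auto
    then show False using G_nb[OF sg tec, of S'] by simp
  qed
qed

lemma Gf_disj:
  assumes "f \<notin> insert e {g. pr ends e g}"
  shows "insert f {g. pr ends f g} \<inter> insert e {g. pr ends e g} = {}"
proof -
  have "False" if g: "g \<in> insert f {g. pr ends f g}" "g \<in> insert e {g. pr ends e g}" for g
  proof -
    have fg: "pr ends f g" using g assms by auto
    show False
    proof (cases "g = e")
      case True then show False using pr_sym[OF sg tec fg] assms True by auto
    next
      case False
      then have "pr ends e g" using g by auto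
      moreover have "pr ends g f" using pr_sym[OF sg tec fg] .
      moreover have "e \<noteq> f" using assms by auto
      ultimately have "pr ends e f" using pr_trans[OF sg tec] by blast
      then show False using assms by auto
    qed
  qed
  then show ?thesis by blast
qed

lemma P2:
  assumes fN: "f \<notin> insert e {g. pr ends e g}"
  shows "card (cut_edges ends (- insert e {g. pr ends e g} - insert f {g. pr ends f g}) S) \<noteq> 1"
proof
  define Ge where "Ge = insert e {g. pr ends e g}"
  define Gf where "Gf = insert f {g. pr ends f g}"
  have dj: "Gf \<inter> Ge = {}" using Gf_disj[OF fN] unfolding Ge_def Gf_def .
  have ef: "e \<noteq> f" using fN by auto
  assume "card (cut_edges ends (- insert e {g. pr ends e g} - insert f {g. pr ends f g}) S) = 1"
  then obtain b where b: "cut_edges ends (-Ge - Gf) S = {b}" unfolding Ge_def Gf_def by (meson card_1_singletonE)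
  have eGf: "e \<notin> Gf" using dj unfolding Ge_def by auto
  have fGe: "f \<notin> Ge" using fN unfolding Ge_def by auto
  have Z1: "\<exists>T. cut_edges ends UNIV T - {e,f} = {z}" if "z \<in> Ge - {e}" for z
  proof -
    have "pr ends e z" using that unfolding Ge_def by auto
    then obtain T where "cut_edges ends UNIV T = {e,z}" unfolding pr_def by auto
    moreover have "z \<noteq> f" using that fGe by auto
    ultimately show ?thesis using that by (intro exI[of _ T]) auto
  qed
  have Z2: "\<exists>T. cut_edges ends UNIV T - {e,f} = {z}" if "z \<in> Gf - {f}" for z
  proof -
    have "pr ends f z" using that unfolding Gf_def by auto
    then obtain T where "cut_edges ends UNIV T = {f,z}" unfolding pr_def by auto
    moreover have "z \<noteq> e" using that eGf by auto
    ultimately show ?thesis using that by (intro exI[of _ T]) auto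
  qed
  have all: "\<forall>z\<in>(Ge - {e}) \<union> (Gf - {f}). \<exists>T. cut_edges ends UNIV T - {e,f} = {z}"
    using Z1 Z2 by blast
  have dj2: "((Ge - {e}) \<union> (Gf - {f})) \<inter> {e,f} = {}" using eGf fGe by auto
  have fin: "finite ((Ge - {e}) \<union> (Gf - {f}))" by simp
  have "\<exists>S'. cut_edges ends UNIV S' \<inter> ((Ge - {e}) \<union> (Gf - {f})) = {} \<and>
      cut_edges ends UNIV S' - ((Ge - {e}) \<union> (Gf - {f})) - {e,f} =
       cut_edges ends UNIV S - ((Ge - {e}) \<union> (Gf - {f})) - {e,f}"
    by (rule cancel[OF sg fin dj2 all])
  then obtain S' where S': "cut_edges ends UNIV S' \<inter> ((Ge - {e}) \<union> (Gf - {f})) = {}"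
      "cut_edges ends UNIV S' - ((Ge - {e}) \<union> (Gf - {f})) - {e,f} =
       cut_edges ends UNIV S - ((Ge - {e}) \<union> (Gf - {f})) - {e,f}" by blast
  have bG: "b \<notin> Ge" "b \<notin> Gf" using b unfolding cut_edges_def by auto
  have "cut_edges ends UNIV S - ((Ge - {e}) \<union> (Gf - {f})) - {e,f} = {b}"
    using b cut_Int[OF sg, of "-Ge - Gf" S] unfolding Ge_def Gf_def by auto
  then have c: "cut_edges ends UNIV S' \<subseteq> {b,e,f}" "b \<in> cut_edges ends UNIV S'"
    using S' by auto
  have be: "b \<noteq> e" "b \<noteq> f" using bG unfolding Ge_def Gf_def by auto
  consider "cut_edges ends UNIV S' = {b}" | "cut_edges ends UNIV S' = {b,e}"
    | "cut_edges ends UNIV S' = {b,f}" | "cut_edges ends UNIV S' = {b,e,f}"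
    using c by blast
  then show False
  proof cases
    case 1 then show False using G_nb[OF sg tec, of S'] by simp
  next
    case 2
    then have "pr ends e b" using be unfolding pr_def by (auto simp: insert_commute)
    then show False using bG unfolding Ge_def by auto
  next
    case 3
    then have "pr ends f b" using be unfolding pr_def by (auto simp: insert_commute)
    then show False using bG unfolding Gf_def by auto
  next
    case 4
    then have "card (cut_edges ends UNIV S') = 3" using be ef by auto
    then show False using no3 4 by auto
  qed
qed

lemma closed_span:
  "X \<subseteq> - insert e {g. pr ends e g} \<Longrightarrow> (\<forall>f\<in>X. \<forall>g. pr ends f g \<longrightarrow> g \<in> X) \<Longrightarrow>
   incidence_vector X \<in> span {x \<in> incidence_vector ` DD V ends. x $ e = 0}"
proof (induction "card X" arbitrary: X rule: less_induct)
  case less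
  define Ge where "Ge = insert e {g. pr ends e g}"
  define X0 where "X0 = {x \<in> incidence_vector ` DD V ends. x $ e = 0}"
  show ?case
  proof (cases "X = {}")
    case True then show ?thesis by (simp add: iv_empty span_zero)
  next
    case False
    then obtain f where f: "f \<in> X" by auto
    define Gf where "Gf = insert f {g. pr ends f g}"
    have fN: "f \<notin> Ge" using less.prems f unfolding Ge_def by auto
    have GfX: "Gf \<subseteq> X" using less.prems(2) f unfolding Gf_def by auto
    have GfN: "Gf \<inter> Ge = {}" using Gf_disj[of f] fN unfolding Gf_def Ge_def by auto
    have s1: "incidence_vector (-Ge) \<in> span X0"
      using sumcomp[OF sg tec, of "-Ge"] P1 unfolding Ge_def X0_def by auto
    have s2: "incidence_vector (-Ge - Gf) \<in> span X0"
      using sumcomp[OF sg tec, of "-Ge - Gf"] P2[of f] fN unfolding Ge_def Gf_def X0_def by auto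
    have "incidence_vector Gf = incidence_vector (-Ge) - incidence_vector (-Ge - Gf)"
    proof -
      have "-Ge - (-Ge - Gf) = Gf" using GfN by auto
      then show ?thesis using iv_diff[of "-Ge - Gf" "-Ge"] by auto
    qed
    then have sG: "incidence_vector Gf \<in> span X0" using span_diff[OF s1 s2] by simp
    have cl: "\<forall>g\<in>X - Gf. \<forall>h. pr ends g h \<longrightarrow> h \<in> X - Gf"
    proof (intro ballI allI impI)
      fix g h assume g: "g \<in> X - Gf" and gh: "pr ends g h"
      have hX: "h \<in> X" using less.prems(2) g gh by auto
      have "h \<notin> Gf"
      proof
        assume "h \<in> Gf"
        then consider "h = f" | "pr ends f h" unfolding Gf_def by auto
        then show False
        proof cases
          case 1 then show False using pr_sym[OF sg tec gh] g unfolding Gf_def by auto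
        next
          case 2
          have "f \<noteq> g" using g unfolding Gf_def by auto
          then have "pr ends f g" using pr_trans[OF sg tec 2 pr_sym[OF sg tec gh]] by auto
          then show False using g unfolding Gf_def by auto
        qed
      qed
      then show "h \<in> X - Gf" using hX by auto
    qed
    have "card (X - Gf) < card X" using f GfX unfolding Gf_def by (intro psubset_card_mono) auto
    moreover have sub: "X - Gf \<subseteq> - insert e {g. pr ends e g}" using less.prems(1) by auto
    ultimately have sX: "incidence_vector (X - Gf) \<in> span X0"
      using less.hyps[OF _ sub cl] unfolding X0_def by blast
    have "incidence_vector X = incidence_vector Gf + incidence_vector (X - Gf)"
      using iv_union[of Gf "X - Gf"] GfX by (simp add: Un_absorb1 Un_Diff_cancel)
    then show ?thesis using span_add[OF sG sX] unfolding X0_def by simp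
  qed
qed

lemma final_if:
  assumes F: "F \<in> DD V ends" "e \<in> F"
  shows "incidence_vector F \<in> span (insert (incidence_vector UNIV)
            {x \<in> incidence_vector ` DD V ends. x $ e = 0})"
proof -
  define X0 where "X0 = {x \<in> incidence_vector ` DD V ends. x $ e = 0}"
  have GeF: "insert e {g. pr ends e g} \<subseteq> F" using DD_pr[OF sg tec F(1)] F(2) by auto
  have cl: "\<forall>f\<in>-F. \<forall>g. pr ends f g \<longrightarrow> g \<in> -F"
  proof (intro ballI allI impI)
    fix f g assume "f \<in> -F" "pr ends f g"
    then show "g \<in> -F" using DD_pr[OF sg tec F(1) pr_sym[OF sg tec \<open>pr ends f g\<close>]] by auto
  qed
  have s: "incidence_vector (-F) \<in> span X0"
    using closed_span[of "-F"] GeF cl unfolding X0_def by auto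
  have "incidence_vector F = incidence_vector UNIV - incidence_vector (-F)"
    using iv_diff[of "-F" UNIV] by (simp add: Diff_Compl)
  moreover have "incidence_vector UNIV \<in> span (insert (incidence_vector UNIV) X0)"
    by (simp add: span_base)
  moreover have "incidence_vector (-F) \<in> span (insert (incidence_vector UNIV) X0)"
    using s span_mono[of X0 "insert (incidence_vector UNIV) X0"] by auto
  ultimately show ?thesis unfolding X0_def by (simp add: span_diff)
qed

end

lemma subspace_coord0: "subspace {x::real^'n. x $ i = 0}"
  unfolding subspace_def by auto

lemma subspace_rel: "subspace {x::real^'n. x $ f - x $ g = x $ i}"
  unfolding subspace_def by (auto simp: algebra_simps)

context
  fixes V :: "'v set" and ends :: "'e::finite \<Rightarrow> 'v set" and e :: 'e
  assumes sg: "simple_graph V ends"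
    and tec: "two_edge_connected ends V UNIV"
begin

lemma onlyif:
  assumes S: "e \<in> cut_edges ends UNIV S" "card (cut_edges ends UNIV S) = 3"
  shows "dim {x \<in> incidence_vector ` DD V ends. x $ e = 0} + 2 \<le> dim (incidence_vector ` DD V ends)"
proof -
  define X where "X = incidence_vector ` DD V ends"
  define X0 where "X0 = {x \<in> X. x $ e = 0}"
  have "card (cut_edges ends UNIV S - {e}) = 2" using S by simp
  then obtain f g where fg: "cut_edges ends UNIV S - {e} = {f,g}" "f \<noteq> g"
    by (meson card_2_iff)
  have cS: "cut_edges ends UNIV S = {e,f,g}" "e \<noteq> f" "e \<noteq> g" using fg S(1) by auto
  define J where "J = - {g}"
  define BR where "BR = {j \<in> J. \<exists>T. cut_edges ends J T = {j}}"
  define J' where "J' = J - BR"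
  have eBR: "e \<notin> BR"
  proof
    assume "e \<in> BR"
    then obtain T where T: "cut_edges ends J T = {e}" unfolding BR_def by auto
    then have T1: "cut_edges ends UNIV T \<subseteq> {e,g}" "e \<in> cut_edges ends UNIV T"
      using cut_Int[OF sg, of J T] unfolding J_def by auto
    show False
    proof (cases "g \<in> cut_edges ends UNIV T")
      case True
      then have "cut_edges ends UNIV T = {e,g}" using T1 by auto
      then have "cut_edges ends UNIV (sdiff S T) = {f}"
        using cut_sdiff[OF sg, of UNIV S T] cS fg(2) by (auto simp: sdiff_def)
      then show False using G_nb[OF sg tec, of "sdiff S T"] by simp
    next
      case False
      then have "cut_edges ends UNIV T = {e}" using T1 by auto
      then show False using G_nb[OF sg tec, of T] by simp
    qed
  qed
  have bl: "\<forall>S0. card (cut_edges ends J' S0) \<noteq> 1"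
  proof (intro allI notI)
    fix S0 assume "card (cut_edges ends J' S0) = 1"
    then obtain h where h: "cut_edges ends J' S0 = {h}" by (meson card_1_singletonE)
    have all: "\<forall>z\<in>BR. \<exists>T. cut_edges ends J T - {} = {z}" unfolding BR_def by auto
    have fin: "finite BR" by simp
    have dj: "BR \<inter> {} = {}" by simp
    have "\<exists>S'. cut_edges ends J S' \<inter> BR = {} \<and> cut_edges ends J S' - BR - {} = cut_edges ends J S0 - BR - {}"
      by (rule cancel[OF sg fin dj all])
    then obtain S' where S': "cut_edges ends J S' \<inter> BR = {}"
      "cut_edges ends J S' - BR - {} = cut_edges ends J S0 - BR - {}" by blast
    have "cut_edges ends J S0 - BR = cut_edges ends J' S0"
      using cut_Int[OF sg, of J S0] cut_Int[OF sg, of J' S0] unfolding J'_def by auto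
    then have "cut_edges ends J S' = {h}" using S' h by auto
    moreover have "h \<in> J" using h unfolding cut_edges_def J'_def by auto
    ultimately have "h \<in> BR" unfolding BR_def by auto
    then show False using h unfolding cut_edges_def J'_def by auto
  qed
  obtain p q where pq: "p \<noteq> q" "ends e = {p,q}" "p \<in> V" "q \<in> V" using ends2[OF sg] by blast
  define R where "R = {y. (p,y) \<in> (adj_rel ends J')\<^sup>*}"
  define K where "K = {j \<in> J'. ends j \<subseteq> R}"
  have K: "is_subgraph V ends R K" "two_edge_connected ends R K"
    using comp[OF sg bl pq(3)] unfolding R_def K_def by auto
  have KD: "K \<in> DD V ends" using K unfolding DD_def by auto
  have eJ': "e \<in> J'" using eBR cS unfolding J'_def J_def by auto
  have eK: "e \<in> K" using comp_mem[OF sg eJ', of p] pq unfolding K_def R_def by auto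
  have gK: "g \<notin> K" unfolding K_def J'_def J_def by auto
  have fK: "f \<in> K"
  proof (rule ccontr)
    assume "f \<notin> K"
    then have "cut_edges ends K S = {e}" using cut_Int[OF sg, of K S] cS eK gK by auto
    then show False using DD_cut[OF sg tec KD, of S] by simp
  qed
  define b where "b = incidence_vector K"
  define a where "a = incidence_vector (UNIV :: 'e set)"
  have X0Z: "X0 \<subseteq> {x. x $ f - x $ g = x $ e}"
  proof
    fix x assume "x \<in> X0"
    then obtain K' where K': "K' \<in> DD V ends" "x = incidence_vector K'" "e \<notin> K'"
      unfolding X0_def X_def by (auto simp: iv_nth split: if_splits)
    have "cut_edges ends K' S = {f,g} \<inter> K'" using cut_Int[OF sg, of K' S] cS K'(3) by auto
    then have "f \<in> K' \<longleftrightarrow> g \<in> K'" using DD_cut[OF sg tec K'(1), of S] fg(2)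
      by (cases "f \<in> K'"; cases "g \<in> K'") auto
    then show "x \<in> {x. x $ f - x $ g = x $ e}" using K' by (auto simp: iv_nth)
  qed
  have bZ: "b \<in> {x. x $ f - x $ g = x $ e}" using fK gK eK unfolding b_def by (auto simp: iv_nth)
  have sp1: "span (insert b X0) \<subseteq> {x. x $ f - x $ g = x $ e}"
    using X0Z bZ by (intro span_minimal subspace_rel) auto
  have aN: "a \<notin> span (insert b X0)"
  proof
    assume "a \<in> span (insert b X0)"
    then have "a $ f - a $ g = a $ e" using sp1 by auto
    then show False unfolding a_def by (simp add: iv_nth)
  qed
  have sp0: "span X0 \<subseteq> {x. x $ e = 0}"
    by (intro span_minimal subspace_coord0) (auto simp: X0_def)
  have bN: "b \<notin> span X0"
  proof
    assume "b \<in> span X0"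
    then have "b $ e = 0" using sp0 by auto
    then show False using eK unfolding b_def by (simp add: iv_nth)
  qed
  have "dim (insert a (insert b X0)) = dim X0 + 2"
    using aN bN by (simp add: dim_insert)
  moreover have "insert a (insert b X0) \<subseteq> X"
    using KD UNIV_DD[OF sg tec] unfolding X0_def X_def a_def b_def by auto
  then have "dim (insert a (insert b X0)) \<le> dim X" by (rule dim_subset)
  ultimately show ?thesis unfolding X0_def X_def by linarith
qed

end

lemma convex_coord_ge: "convex {x::real^'n. 0 \<le> x $ i}"
  unfolding convex_def by auto

lemma convex_coord_eq: "convex {x::real^'n. x $ i = 0}"
  unfolding convex_def by auto

theorem mainTheorem5:
  fixes V :: "'v set" and ends :: "'e::finite \<Rightarrow> 'v set" and e :: 'e
  assumes "simple_graph V ends"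
    and "two_edge_connected ends V UNIV"
  shows "((\<forall>x\<in>TECSP V ends. x $ e \<ge> 0) \<and>
          {x \<in> TECSP V ends. x $ e = 0} facet_of TECSP V ends)
     \<longleftrightarrow> \<not> (\<exists>S. {} \<noteq> S \<and> S \<subset> V \<and> e \<in> cut_edges ends UNIV S
                  \<and> card (cut_edges ends UNIV S) = 3)"
proof -
  note sg = assms(1) and tec = assms(2)
  define X where "X = incidence_vector ` DD V ends"
  define X0 where "X0 = {x \<in> X. x $ e = 0}"
  have TE: "TECSP V ends = convex hull X"
  proof -
    have "{incidence_vector F |F. \<exists>W. is_subgraph V ends W F \<and> two_edge_connected ends W F}
       = incidence_vector ` DD V ends" unfolding DD_def by blast
    then show ?thesis unfolding TECSP_def X_def by simp
  qed
  have finX: "finite X" unfolding X_def by simp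
  have emp: "{} \<in> DD V ends"
    unfolding DD_def
    by (rule CollectI, rule exI[of _ "{}"])
       (simp add: is_subgraph_def two_edge_connected_def connected_graph_def)
  have "0 \<in> X" using emp iv_empty unfolding X_def by (metis image_eqI)
  then have zX0: "0 \<in> X0" unfolding X0_def by simp
  have X0X: "X0 \<subseteq> X" unfolding X0_def by auto
  have Xge: "X \<subseteq> {x. 0 \<le> x $ e}" unfolding X_def by (auto simp: iv_nth)
  have "convex hull X \<subseteq> {x. 0 \<le> x $ e}"
    by (rule hull_minimal[OF Xge]) (rule convex_coord_ge)
  then have nonneg: "\<forall>x\<in>convex hull X. 0 \<le> x $ e" by auto
  have face: "{x \<in> convex hull X. x $ e = 0} face_of convex hull X"
  proof -
    have "(convex hull X \<inter> {x. axis e 1 \<bullet> x = 0}) face_of convex hull X"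
      by (rule face_of_Int_supporting_hyperplane_ge) (auto simp: inner_axis' nonneg)
    moreover have "convex hull X \<inter> {x. axis e 1 \<bullet> x = 0} = {x \<in> convex hull X. x $ e = 0}"
      by (auto simp: inner_axis')
    ultimately show ?thesis by simp
  qed
  have Fc: "{x \<in> convex hull X. x $ e = 0} = convex hull X0"
  proof
    show "convex hull X0 \<subseteq> {x \<in> convex hull X. x $ e = 0}"
    proof -
      have "convex hull X0 \<subseteq> convex hull X" using X0X by (rule hull_mono)
      moreover have "X0 \<subseteq> {x. x $ e = 0}" unfolding X0_def by auto
      then have "convex hull X0 \<subseteq> {x. x $ e = 0}"
        by (rule hull_minimal) (rule convex_coord_eq)
      ultimately show ?thesis by auto
    qed
    obtain S' where S': "S' \<subseteq> X" "{x \<in> convex hull X. x $ e = 0} = convex hull S'"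
      by (rule face_of_convex_hull_subset[OF finite_imp_compact[OF finX] face])
    have "S' \<subseteq> X0"
    proof
      fix s assume "s \<in> S'"
      then have "s \<in> convex hull S'" by (rule hull_inc)
      then have "s \<in> {x \<in> convex hull X. x $ e = 0}" using S'(2) by simp
      then show "s \<in> X0" using \<open>s \<in> S'\<close> S'(1) unfolding X0_def by auto
    qed
    then show "{x \<in> convex hull X. x $ e = 0} \<subseteq> convex hull X0"
      unfolding S'(2) by (rule hull_mono)
  qed
  have affF: "aff_dim (convex hull X0) = int (dim X0)"
    using aff_dim_zero[of X0] zX0 hull_inc[of 0 X0] by (simp add: aff_dim_convex_hull)
  have affP: "aff_dim (convex hull X) = int (dim X)"
    using aff_dim_zero[of X] zX0 X0X hull_inc[of 0 X] by (simp add: aff_dim_convex_hull subset_iff)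
  have "0 \<in> convex hull X0" using zX0 by (rule hull_inc)
  then have ne: "convex hull X0 \<noteq> {}" by auto
  have LHS: "((\<forall>x\<in>TECSP V ends. x $ e \<ge> 0) \<and>
          {x \<in> TECSP V ends. x $ e = 0} facet_of TECSP V ends) \<longleftrightarrow> int (dim X0) = int (dim X) - 1"
    unfolding TE facet_of_def using nonneg face Fc affF affP ne by auto
  have aX: "incidence_vector UNIV \<in> X" using UNIV_DD[OF sg tec] unfolding X_def by auto
  have sp0: "span X0 \<subseteq> {x. x $ e = 0}"
    by (intro span_minimal subspace_coord0) (auto simp: X0_def)
  have aN: "incidence_vector UNIV \<notin> span X0"
  proof
    assume "incidence_vector UNIV \<in> span X0"
    then show False using sp0 by (auto simp: iv_nth)
  qed
  have low: "dim X0 + 1 \<le> dim X"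
  proof -
    have "dim (insert (incidence_vector UNIV) X0) = dim X0 + 1" using aN by (simp add: dim_insert)
    moreover have "dim (insert (incidence_vector UNIV) X0) \<le> dim X"
      using aX X0X by (intro dim_subset) auto
    ultimately show ?thesis by simp
  qed
  show ?thesis
  proof (cases "\<exists>S. {} \<noteq> S \<and> S \<subset> V \<and> e \<in> cut_edges ends UNIV S \<and> card (cut_edges ends UNIV S) = 3")
    case True
    then obtain S where "e \<in> cut_edges ends UNIV S" "card (cut_edges ends UNIV S) = 3" by blast
    then have "dim X0 + 2 \<le> dim X" using onlyif[OF sg tec] unfolding X0_def X_def by blast
    then show ?thesis using LHS True by simp
  next
    case False
    have no3: "\<forall>S. e \<in> cut_edges ends UNIV S \<longrightarrow> card (cut_edges ends UNIV S) \<noteq> 3"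
    proof (intro allI impI notI)
      fix S assume S: "e \<in> cut_edges ends UNIV S" "card (cut_edges ends UNIV S) = 3"
      have eq: "cut_edges ends UNIV S = cut_edges ends UNIV (S \<inter> V)" by (rule cut_inter_V[OF sg])
      obtain p q where pq: "p \<noteq> q" "ends e = {p,q}" "p \<in> V" "q \<in> V" using ends2[OF sg] by blast
      have "p \<in> S \<longleftrightarrow> q \<notin> S" using S(1) cut_mem[OF sg pq(2,1)] by auto
      then have "{} \<noteq> S \<inter> V" "S \<inter> V \<subset> V" using pq by auto
      then show False using False S eq by auto
    qed
    have "X \<subseteq> span (insert (incidence_vector UNIV) X0)"
    proof
      fix x assume "x \<in> X"
      then obtain F where F: "F \<in> DD V ends" "x = incidence_vector F" unfolding X_def by auto
      show "x \<in> span (insert (incidence_vector UNIV) X0)"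
      proof (cases "e \<in> F")
        case True
        then show ?thesis using final_if[OF sg tec no3 F(1)] F(2) unfolding X0_def X_def by auto
      next
        case False
        then have "x \<in> X0" using F unfolding X0_def X_def by (auto simp: iv_nth)
        then show ?thesis by (simp add: span_base)
      qed
    qed
    then have "dim X \<le> dim (span (insert (incidence_vector UNIV) X0))" by (rule dim_subset)
    also have "\<dots> \<le> dim X0 + 1" by (simp add: dim_insert)
    finally have "dim X \<le> dim X0 + 1" .
    then show ?thesis using LHS False low by simp
  qed
qed

end
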